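(* Let $\mu$ be a partition of $n$, let $T$ be a row-strict filling of $\mu$, and write $\Phi(T)=x_2^{\alpha_2}\cdots x_n^{\alpha_n}$. For each $i\in\{2,\dots,n\}$, the shape $\mu^{(i)}$ of the subfilling $T^{(i)}$ has at least $\alpha_i+1$ nonzero rows.
   Context: A partition $\mu=(\mu_1\ge\cdots\ge\mu_s>0)$ of $n$ is drawn as a Young diagram with $\mu_k$ boxes in row $k$ (rows top to bottom, left-justified). A filling places $1,\dots,n$ bijectively in the boxes; it is row-strict if entries increase left to right along rows. $T^{(i)}$ is obtained from $T$ by deleting the boxes containing $i+1,\dots,n$; its shape is $\mu^{(i)}$. Dimension pairs (with $h(j)=j$): $(a,b)$ is a dimension pair of $T$ if (1) $b>a$; (2) $b$ is in the same column as $a$ strictly below it, or in a column strictly left of $a$'s column; (3) if a box immediately right of $a$ exists and contains $c$, then $b\le c$. $D^T_j$ is the set of dimension pairs $(a,j)$, and $\Phi(T)=\prod_{j=2}^n x_j^{|D^T_j|}\in\mathbb{Z}[x_1,\dots,x_n]$. *)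

theory Defs
  imports Main
begin

text \<open>A partition mu = (mu_1 >= ... >= mu_s > 0) is a list of positive, weakly
decreasing naturals. Boxes are 0-indexed pairs (row, column): row k has
mu!k boxes, rows top to bottom, columns left to right.\<close>

definition is_partition :: "nat list \<Rightarrow> nat \<Rightarrow> bool" where
  "is_partition mu n \<longleftrightarrow> sorted (rev mu) \<and> (\<forall>k\<in>set mu. 0 < k) \<and> sum_list mu = n"

definition boxes :: "nat list \<Rightarrow> (nat \<times> nat) set" where
  "boxes mu = {(r, c). r < length mu \<and> c < mu ! r}"

definition is_filling :: "nat list \<Rightarrow> nat \<Rightarrow> (nat \<times> nat \<Rightarrow> nat) \<Rightarrow> bool" where
  "is_filling mu n T \<longleftrightarrow> bij_betw T (boxes mu) {1..n}"

definition row_strict :: "nat list \<Rightarrow> (nat \<times> nat \<Rightarrow> nat) \<Rightarrow> bool" where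
  "row_strict mu T \<longleftrightarrow>
     (\<forall>r c c'. (r, c) \<in> boxes mu \<longrightarrow> (r, c') \<in> boxes mu \<longrightarrow> c < c' \<longrightarrow> T (r, c) < T (r, c'))"

text \<open>Dimension pairs (with h(j) = j).\<close>
definition dim_pair :: "nat list \<Rightarrow> (nat \<times> nat \<Rightarrow> nat) \<Rightarrow> nat \<Rightarrow> nat \<Rightarrow> bool" where
  "dim_pair mu T a b \<longleftrightarrow>
     b > a \<and>
     (\<exists>ra ca rb cb. (ra, ca) \<in> boxes mu \<and> (rb, cb) \<in> boxes mu \<and>
        T (ra, ca) = a \<and> T (rb, cb) = b \<and>
        ((cb = ca \<and> rb > ra) \<or> cb < ca) \<and>
        ((ra, Suc ca) \<in> boxes mu \<longrightarrow> b \<le> T (ra, Suc ca)))"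

definition D_set :: "nat list \<Rightarrow> (nat \<times> nat \<Rightarrow> nat) \<Rightarrow> nat \<Rightarrow> (nat \<times> nat) set" where
  "D_set mu T j = {(a, j) | a. dim_pair mu T a j}"

text \<open>The monomial Phi(T) = prod_{j=2}^n x_j^{|D_j|}, represented by its exponent
vector: Phi_exp mu n T j is the exponent of x_j in Phi(T).\<close>
definition Phi_exp :: "nat list \<Rightarrow> nat \<Rightarrow> (nat \<times> nat \<Rightarrow> nat) \<Rightarrow> nat \<Rightarrow> nat" where
  "Phi_exp mu n T j = (if 2 \<le> j \<and> j \<le> n then card (D_set mu T j) else 0)"

definition sub_boxes :: "nat list \<Rightarrow> (nat \<times> nat \<Rightarrow> nat) \<Rightarrow> nat \<Rightarrow> (nat \<times> nat) set" where
  "sub_boxes mu T i = {p \<in> boxes mu. T p \<le> i}"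

definition nonzero_rows_sub :: "nat list \<Rightarrow> (nat \<times> nat \<Rightarrow> nat) \<Rightarrow> nat \<Rightarrow> nat" where
  "nonzero_rows_sub mu T i = card (fst ` sub_boxes mu T i)"

end

theory Submission
  imports Defs
begin

lemma same_row_col:
  assumes rs: "row_strict mu T"
    and b1: "(r, c) \<in> boxes mu" and b2: "(r, c') \<in> boxes mu"
    and h1: "(r, Suc c) \<in> boxes mu \<longrightarrow> j \<le> T (r, Suc c)"
    and h2: "(r, Suc c') \<in> boxes mu \<longrightarrow> j \<le> T (r, Suc c')"
    and l1: "T (r, c) < j" and l2: "T (r, c') < j"
  shows "c = c'"
proof (rule ccontr)
  assume ne: "c \<noteq> c'"
  have key: "False" if "x < y" "(r, x) \<in> boxes mu" "(r, y) \<in> boxes mu"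
    "(r, Suc x) \<in> boxes mu \<longrightarrow> j \<le> T (r, Suc x)" "T (r, y) < j" for x y
  proof -
    have "(r, Suc x) \<in> boxes mu" using that(1,3) by (auto simp: boxes_def)
    hence "j \<le> T (r, Suc x)" using that(4) by blast
    moreover have "T (r, Suc x) \<le> T (r, y)"
    proof (cases "Suc x = y")
      case True then show ?thesis by simp
    next
      case False
      then have "Suc x < y" using that(1) by simp
      then show ?thesis using rs \<open>(r, Suc x) \<in> boxes mu\<close> that(3)
        unfolding row_strict_def by (meson less_imp_le)
    qed
    ultimately show False using that(5) by simp
  qed
  show False
  proof (cases "c < c'")
    case True then show ?thesis using key[of c c'] b1 b2 h1 l2 by blast
  next
    case False then have "c' < c" using ne by simp
    then show ?thesis using key[of c' c] b1 b2 h2 l1 by blast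
  qed
qed

theorem mainTheorem4:
  fixes mu :: "nat list" and n :: nat and T :: "nat \<times> nat \<Rightarrow> nat"
  assumes "is_partition mu n"
    and "is_filling mu n T"
    and "row_strict mu T"
  shows "\<forall>i\<in>{2..n}. nonzero_rows_sub mu T i \<ge> Phi_exp mu n T i + 1"
proof
  fix i assume i: "i \<in> {2..n}"
  have bij: "bij_betw T (boxes mu) {1..n}" using assms(2) unfolding is_filling_def .
  have inj: "inj_on T (boxes mu)" using bij bij_betw_def by blast
  have finB: "finite (boxes mu)"
  proof -
    have "boxes mu \<subseteq> {..<length mu} \<times> {..Max (insert 0 (set mu))}"
    proof
      fix p assume p: "p \<in> boxes mu"
      obtain r c where rc: "p = (r, c)" by (cases p)
      have r: "r < length mu" "c < mu ! r" using p rc by (auto simp: boxes_def)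
      have "mu ! r \<in> set mu" using r by simp
      hence m: "mu ! r \<le> Max (insert 0 (set mu))" by simp
      show "p \<in> {..<length mu} \<times> {..Max (insert 0 (set mu))}" 
      proof -
        have "c \<le> Max (insert 0 (set mu))" using r(2) m by linarith
        thus ?thesis using r(1) rc by blast
      qed
    qed
    thus ?thesis by (rule finite_subset) auto
  qed
  have "i \<in> T ` boxes mu" using bij i by (auto simp: bij_betw_def)
  then obtain pj where pj: "pj \<in> boxes mu" "T pj = i" by blast
  define S where "S = sub_boxes mu T i"
  define A where "A = {a. dim_pair mu T a i}"
  define g where "g = the_inv_into (boxes mu) T"
  have finS: "finite (fst ` S)" using finB by (auto simp: S_def sub_boxes_def)
  have pjS: "fst pj \<in> fst ` S" using pj by (auto simp: S_def sub_boxes_def)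
  have info: "g a \<in> boxes mu \<and> T (g a) = a \<and> a < i \<and>
      ((fst (g a), Suc (snd (g a))) \<in> boxes mu \<longrightarrow> i \<le> T (fst (g a), Suc (snd (g a))))
      \<and> fst (g a) \<noteq> fst pj" if "a \<in> A" for a
  proof -
    from that obtain ra ca rb cb where d: "i > a" "(ra, ca) \<in> boxes mu" "(rb, cb) \<in> boxes mu"
      "T (ra, ca) = a" "T (rb, cb) = i" "(cb = ca \<and> rb > ra) \<or> cb < ca"
      "(ra, Suc ca) \<in> boxes mu \<longrightarrow> i \<le> T (ra, Suc ca)"
      unfolding A_def dim_pair_def by blast
    have ga: "g a = (ra, ca)" unfolding g_def using the_inv_into_f_eq[OF inj d(4) d(2)]
      by simp
    have "(rb, cb) = pj" using inj d(3,5) pj by (auto dest: inj_onD)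
    moreover have "ra \<noteq> rb"
    proof
      assume "ra = rb"
      with d(6) have "cb < ca" by auto
      then have "T (rb, cb) < T (ra, ca)" using assms(3) d(2,3) \<open>ra = rb\<close>
        unfolding row_strict_def by blast
      then show False using d by simp
    qed
    ultimately show ?thesis using ga d by auto
  qed
  have injA: "inj_on (\<lambda>a. fst (g a)) A"
  proof (rule inj_onI)
    fix a a' assume a: "a \<in> A" "a' \<in> A" "fst (g a) = fst (g a')"
    obtain r c where gc: "g a = (r, c)" by (cases "g a")
    obtain r' c' where gc': "g a' = (r', c')" by (cases "g a'")
    have "r = r'" using a(3) gc gc' by simp
    have "c = c'"
      using same_row_col[OF assms(3), of r c c' i] info[OF a(1)] info[OF a(2)] gc gc' \<open>r = r'\<close>
      by auto
    then show "a = a'" using info[OF a(1)] info[OF a(2)] gc gc' \<open>r = r'\<close> by metis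
  qed
  have sub: "(\<lambda>a. fst (g a)) ` A \<subseteq> fst ` S - {fst pj}"
  proof
    fix x assume "x \<in> (\<lambda>a. fst (g a)) ` A"
    then obtain a where "a \<in> A" "x = fst (g a)" by blast
    with info[OF this(1)] show "x \<in> fst ` S - {fst pj}"
      by (force simp: S_def sub_boxes_def)
  qed
  have "card A \<le> card (fst ` S - {fst pj})"
    using card_inj_on_le[OF injA sub] finS by simp
  also have "\<dots> = card (fst ` S) - 1" using pjS finS by simp
  finally have cA: "card A + 1 \<le> card (fst ` S)" using pjS finS
    by (metis One_nat_def card_gt_0_iff empty_iff le_diff_conv2 Suc_leI)
  have "D_set mu T i = (\<lambda>a. (a, i)) ` A" by (auto simp: D_set_def A_def)
  hence "card (D_set mu T i) = card A" by (simp add: card_image inj_on_def)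
  thus "nonzero_rows_sub mu T i \<ge> Phi_exp mu n T i + 1"
    using cA i by (simp add: Phi_exp_def nonzero_rows_sub_def S_def)
qed

end
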